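(* Let $A=\sum_{k=1}^n A_k\,dx^k$ be a smooth $r\times r$ complex-matrix-valued $1$-form on $\mathbb{R}^n$ (i.e. a connection $d+A$ on the trivial rank $r$ complex bundle on $\mathbb{R}^n$). Then there exists a smooth function $g$ on $\mathbb{R}^n$ with values in invertible $(2n+2)r\times(2n+2)r$ complex matrices such that $A_{ij}=[dg\,g^{-1}]_{ij}$ for all $1\le i,j\le r$, i.e. $A$ is the upper-left $r\times r$ block of $dg\,g^{-1}$. *)

theory Defs
  imports "HOL-Analysis.Analysis" "Jordan_Normal_Form.Matrix"
begin

fun Ck :: "nat \<Rightarrow> ('a::real_normed_vector \<Rightarrow> 'b::real_normed_vector) \<Rightarrow> bool" where
  "Ck 0 f = continuous_on UNIV f"
| "Ck (Suc k) f = ((\<forall>x. f differentiable (at x)) \<and>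
      (\<forall>v. Ck k (\<lambda>x. frechet_derivative f (at x) v)))"

definition smooth_fun :: "('a::real_normed_vector \<Rightarrow> 'b::real_normed_vector) \<Rightarrow> bool" where
  "smooth_fun f \<longleftrightarrow> (\<forall>k. Ck k f)"

definition smooth_mat_fun :: "nat \<Rightarrow> ('a::real_normed_vector \<Rightarrow> complex mat) \<Rightarrow> bool" where
  "smooth_mat_fun N g \<longleftrightarrow> (\<forall>x. g x \<in> carrier_mat N N) \<and>
     (\<forall>i<N. \<forall>j<N. smooth_fun (\<lambda>x. g x $$ (i,j)))"

definition partial_mat :: "'n::finite \<Rightarrow> (real^'n \<Rightarrow> complex mat) \<Rightarrow> real^'n \<Rightarrow> complex mat" where
  "partial_mat k g x = Matrix.mat (dim_row (g x)) (dim_col (g x))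
     (\<lambda>(i,j). frechet_derivative (\<lambda>y. g y $$ (i,j)) (at x) (axis k 1))"

definition mat_inv :: "complex mat \<Rightarrow> complex mat" where
  "mat_inv M = (THE B. inverts_mat M B \<and> inverts_mat B M)"

end

theory Submission
  imports Defs
begin

lemma Ck_Suc_Ck: "Ck (Suc k) f \<Longrightarrow> Ck k f"
proof (induction k arbitrary: f)
  case 0
  then show ?case by (auto intro!: differentiable_imp_continuous_on differentiable_at_imp_differentiable_on)
next
  case (Suc k)
  then show ?case by (metis Ck.simps(2))
qed

lemma Ck_const: "Ck k (\<lambda>x. c)"
  by (induction k arbitrary: c) auto

lemma fd_eq: "f differentiable (at x) \<Longrightarrow> ((f has_derivative frechet_derivative f (at x)) (at x))"
  using frechet_derivative_works by blast

lemma Ck_add: "Ck k f \<Longrightarrow> Ck k g \<Longrightarrow> Ck k (\<lambda>x. f x + g x)"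
proof (induction k arbitrary: f g)
  case 0
  then show ?case by (auto intro!: continuous_on_add)
next
  case (Suc k)
  have eq: "(\<lambda>x. frechet_derivative (\<lambda>x. f x + g x) (at x) v) =
     (\<lambda>x. frechet_derivative f (at x) v + frechet_derivative g (at x) v)" for v
  proof
    fix x
    have "((\<lambda>x. f x + g x) has_derivative (\<lambda>v. frechet_derivative f (at x) v + frechet_derivative g (at x) v)) (at x)"
      using Suc.prems by (auto intro!: has_derivative_add fd_eq)
    from frechet_derivative_at[OF this] show "frechet_derivative (\<lambda>x. f x + g x) (at x) v =
      frechet_derivative f (at x) v + frechet_derivative g (at x) v" by metis
  qed
  show ?case using Suc by (auto simp: eq)
qed

lemma Ck_mult: fixes f g :: "'a::real_normed_vector \<Rightarrow> 'b::real_normed_algebra"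
  shows "Ck k f \<Longrightarrow> Ck k g \<Longrightarrow> Ck k (\<lambda>x. f x * g x)"
proof (induction k arbitrary: f g)
  case 0
  then show ?case by (auto intro!: continuous_on_mult)
next
  case (Suc k)
  have eq: "(\<lambda>x. frechet_derivative (\<lambda>x. f x * g x) (at x) v) =
     (\<lambda>x. f x * frechet_derivative g (at x) v + frechet_derivative f (at x) v * g x)" for v
  proof
    fix x
    have "((\<lambda>x. f x * g x) has_derivative (\<lambda>v. f x * frechet_derivative g (at x) v + frechet_derivative f (at x) v * g x)) (at x)"
      using Suc.prems by (auto intro!: has_derivative_mult fd_eq)
    from frechet_derivative_at[OF this] show "frechet_derivative (\<lambda>x. f x * g x) (at x) v =
      f x * frechet_derivative g (at x) v + frechet_derivative f (at x) v * g x" by metis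
  qed
  have f: "Ck k f" "Ck k g" using Suc.prems Ck_Suc_Ck by blast+
  show ?case using Suc f by (auto simp: eq intro!: Ck_add)
qed

lemma Ck_linear: "bounded_linear f \<Longrightarrow> Ck k f"
proof (cases k)
  case 0
  assume "bounded_linear f" then show ?thesis using 0
    by (simp add: linear_continuous_on)
next
  case (Suc m)
  assume l: "bounded_linear f"
  have "frechet_derivative f (at x) = f" for x
    using frechet_derivative_at[OF bounded_linear_imp_has_derivative[OF l]] by metis
  moreover have "f differentiable (at x)" for x
    using bounded_linear_imp_differentiable[OF l] by blast
  ultimately show ?thesis using Suc by (simp add: Ck_const)
qed

lemma Ck_sum: "finite S \<Longrightarrow> (\<And>i. i \<in> S \<Longrightarrow> Ck k (f i)) \<Longrightarrow> Ck k (\<lambda>x. \<Sum>i\<in>S. f i x)"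
  by (induction S rule: finite_induct) (auto intro!: Ck_add simp: Ck_const)


lemma delta_mult: "(if P then 1 else 0) * (y::complex) = (if P then y else 0)" "y * (if P then 1 else 0) = (if P then y else 0)"
  by auto

lemma nilp_inv:
  fixes X :: "complex mat"
  assumes X: "X \<in> carrier_mat N N" and XX: "X * X = 0\<^sub>m N N"
  shows "(1\<^sub>m N + X) * (1\<^sub>m N - X) = 1\<^sub>m N" "(1\<^sub>m N - X) * (1\<^sub>m N + X) = 1\<^sub>m N"
proof -
  have "(1\<^sub>m N + X) * (1\<^sub>m N - X) = 1\<^sub>m N - X * X"
  proof (rule eq_matI)
    fix i j assume ij: "i < dim_row (1\<^sub>m N - X * X)" "j < dim_col (1\<^sub>m N - X * X)"
    then have ij': "i < N" "j < N" using X by auto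
    have "((1\<^sub>m N + X) * (1\<^sub>m N - X)) $$ (i,j) = (\<Sum>l<N. ((if i = l then 1 else 0) + X $$ (i,l)) * ((if l = j then 1 else 0) - X $$ (l,j)))"
      using X ij' by (auto simp: scalar_prod_def atLeast0LessThan intro!: sum.cong)
    also have "\<dots> = (\<Sum>l<N. (if i = l then 1 else 0) * (if l = j then 1 else 0)) - (\<Sum>l<N. (if i = l then 1 else 0) * X $$ (l,j))
        + (\<Sum>l<N. X $$ (i,l) * (if l = j then 1 else 0)) - (\<Sum>l<N. X $$ (i,l) * X $$ (l,j))"
      by (simp add: algebra_simps sum.distrib sum_subtractf)
    also have "\<dots> = (if i = j then 1 else 0) - (\<Sum>l<N. X $$ (i,l) * X $$ (l,j))"
      using ij' by (simp add: delta_mult)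
    also have "\<dots> = (1\<^sub>m N - X * X) $$ (i,j)"
      using X ij' by (auto simp: scalar_prod_def atLeast0LessThan intro!: sum.cong)
    finally show "((1\<^sub>m N + X) * (1\<^sub>m N - X)) $$ (i,j) = (1\<^sub>m N - X * X) $$ (i,j)" .
  qed (use X in auto)
  then show "(1\<^sub>m N + X) * (1\<^sub>m N - X) = 1\<^sub>m N" using XX by (auto intro!: eq_matI)
  have "(1\<^sub>m N - X) * (1\<^sub>m N + X) = 1\<^sub>m N - X * X"
  proof (rule eq_matI)
    fix i j assume ij: "i < dim_row (1\<^sub>m N - X * X)" "j < dim_col (1\<^sub>m N - X * X)"
    then have ij': "i < N" "j < N" using X by auto
    have "((1\<^sub>m N - X) * (1\<^sub>m N + X)) $$ (i,j) = (\<Sum>l<N. ((if i = l then 1 else 0) - X $$ (i,l)) * ((if l = j then 1 else 0) + X $$ (l,j)))"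
      using X ij' by (auto simp: scalar_prod_def atLeast0LessThan intro!: sum.cong)
    also have "\<dots> = (\<Sum>l<N. (if i = l then 1 else 0) * (if l = j then 1 else 0)) + (\<Sum>l<N. (if i = l then 1 else 0) * X $$ (l,j))
        - (\<Sum>l<N. X $$ (i,l) * (if l = j then 1 else 0)) - (\<Sum>l<N. X $$ (i,l) * X $$ (l,j))"
      by (simp add: algebra_simps sum.distrib sum_subtractf)
    also have "\<dots> = (if i = j then 1 else 0) - (\<Sum>l<N. X $$ (i,l) * X $$ (l,j))"
      using ij' by (simp add: delta_mult)
    also have "\<dots> = (1\<^sub>m N - X * X) $$ (i,j)"
      using X ij' by (auto simp: scalar_prod_def atLeast0LessThan intro!: sum.cong)
    finally show "((1\<^sub>m N - X) * (1\<^sub>m N + X)) $$ (i,j) = (1\<^sub>m N - X * X) $$ (i,j)" .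
  qed (use X in auto)
  then show "(1\<^sub>m N - X) * (1\<^sub>m N + X) = 1\<^sub>m N" using XX by (auto intro!: eq_matI)
qed

lemma mat_inv_eq:
  fixes M B :: "complex mat"
  assumes M: "M \<in> carrier_mat N N" and B: "B \<in> carrier_mat N N"
    and MB: "M * B = 1\<^sub>m N" and BM: "B * M = 1\<^sub>m N"
  shows "mat_inv M = B" "invertible_mat M"
proof -
  have P: "inverts_mat M B \<and> inverts_mat B M" using M B MB BM by (auto simp: inverts_mat_def)
  show "invertible_mat M" using P M unfolding invertible_mat_def by (auto simp: square_mat.simps)
  show "mat_inv M = B" unfolding mat_inv_def
  proof (rule the_equality)
    show "inverts_mat M B \<and> inverts_mat B M" by (rule P)
  next
    fix B' assume "inverts_mat M B' \<and> inverts_mat B' M"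
    then have 1: "M * B' = 1\<^sub>m N" "B' * M = 1\<^sub>m (dim_row B')" using M by (auto simp: inverts_mat_def)
    have "dim_row B' = N" using 1(2) M by (metis carrier_matD(2) index_mult_mat(3) index_one_mat(3))
    moreover have "dim_col B' = N" using 1(1) by (metis index_mult_mat(3) index_one_mat(3))
    ultimately have B'c: "B' \<in> carrier_mat N N" by auto
    have "B' = B' * (M * B)" using MB B'c by simp
    also have "\<dots> = (B' * M) * B" using B'c M B by simp
    also have "\<dots> = B" using 1(2) \<open>dim_row B' = N\<close> B by simp
    finally show "B' = B" .
  qed
qed


definition Bm :: "(nat \<Rightarrow> 'n::finite) \<Rightarrow> nat \<Rightarrow> nat \<Rightarrow> nat \<Rightarrow> real^'n \<Rightarrow> complex mat" where
 "Bm e n r N x = Matrix.mat N N (\<lambda>(i,j). if i < r \<and> r \<le> j \<and> j < Suc n * r \<and> j mod r = i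
     then complex_of_real (x $ e (j div r - 1)) else 0)"

definition Cm :: "(nat \<Rightarrow> 'n::finite) \<Rightarrow> nat \<Rightarrow> nat \<Rightarrow> nat \<Rightarrow> ('n \<Rightarrow> real^'n \<Rightarrow> complex mat) \<Rightarrow> real^'n \<Rightarrow> complex mat" where
 "Cm e n r N A x = Matrix.mat N N (\<lambda>(i,j). if r \<le> i \<and> i < Suc n * r \<and> j < r
     then - (A (e (i div r - 1)) x $$ (i mod r, j)) else 0)"

lemma Bm_carrier[simp]: "Bm e n r N x \<in> carrier_mat N N" by (simp add: Bm_def)
lemma Cm_carrier[simp]: "Cm e n r N A x \<in> carrier_mat N N" by (simp add: Cm_def)

lemma Bm_sq: "Bm e n r N x * Bm e n r N x = 0\<^sub>m N N"
  by (rule eq_matI) (auto simp: Bm_def scalar_prod_def intro!: sum.neutral)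

lemma Cm_sq: "Cm e n r N A x * Cm e n r N A x = 0\<^sub>m N N"
  by (rule eq_matI) (auto simp: Cm_def scalar_prod_def intro!: sum.neutral)

lemma g_row:
  assumes "i < r" "i < N" "l < N"
  shows "((1\<^sub>m N + Cm e n r N A x) * (1\<^sub>m N + Bm e n r N x)) $$ (i,l)
     = (if i = l then 1 else 0) + Bm e n r N x $$ (i,l)"
proof -
  have "((1\<^sub>m N + Cm e n r N A x) * (1\<^sub>m N + Bm e n r N x)) $$ (i,l)
     = (\<Sum>m\<in>{0..<N}. (if i = m then 1 else 0) * (1\<^sub>m N + Bm e n r N x) $$ (m,l))"
    using assms by (subst index_mult_mat(1)) (auto simp: scalar_prod_def Cm_def Bm_def intro!: sum.cong)
  also have "\<dots> = (1\<^sub>m N + Bm e n r N x) $$ (i,l)" using assms by (simp add: delta_mult)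
  finally show ?thesis using assms by (simp add: Bm_def)
qed

lemma H_col:
  assumes "r \<le> p" "p < N" "j < r" "j < N"
  shows "((1\<^sub>m N - Bm e n r N x) * (1\<^sub>m N - Cm e n r N A x)) $$ (p,j) = - Cm e n r N A x $$ (p,j)"
proof -
  have "((1\<^sub>m N - Bm e n r N x) * (1\<^sub>m N - Cm e n r N A x)) $$ (p,j)
     = (\<Sum>m\<in>{0..<N}. (if p = m then 1 else 0) * (1\<^sub>m N - Cm e n r N A x) $$ (m,j))"
    using assms by (subst index_mult_mat(1)) (auto simp: scalar_prod_def Cm_def Bm_def intro!: sum.cong)
  also have "\<dots> = (1\<^sub>m N - Cm e n r N A x) $$ (p,j)" using assms by (simp add: delta_mult)
  finally show ?thesis using assms by (simp add: Cm_def)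
qed

lemma idx_equiv:
  fixes e :: "nat \<Rightarrow> 'n" and f :: "'n \<Rightarrow> nat"
  assumes fe: "\<And>q. q < n \<Longrightarrow> f (e q) = q" and ef: "e (f k) = k" and fk: "f k < n" and i: "i < r"
  shows "(r \<le> l \<and> l < Suc n * r \<and> l mod r = i \<and> e (l div r - 1) = k) \<longleftrightarrow> l = Suc (f k) * r + i"
proof
  assume h: "r \<le> l \<and> l < Suc n * r \<and> l mod r = i \<and> e (l div r - 1) = k"
  have r0: "0 < r" using i by simp
  have "r div r \<le> l div r" by (rule div_le_mono) (use h in auto)
  then have d1: "1 \<le> l div r" using r0 by simp
  have d2: "l div r < Suc n" using h r0 by (intro less_mult_imp_div_less) auto
  have "f k = l div r - 1" using fe[of "l div r - 1"] h d1 d2 by auto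
  then have "l div r = Suc (f k)" using d1 by simp
  then show "l = Suc (f k) * r + i" using h div_mult_mod_eq[of l r] by metis
next
  assume h: "l = Suc (f k) * r + i"
  have r0: "r \<noteq> 0" using i by simp
  have md: "l mod r = i" "l div r = Suc (f k)" 
    using h i r0 by (metis mod_mult_self3 mod_less, metis div_mult_self3 div_less add_0_right)
  have "Suc (f k) * r + i < Suc (Suc (f k)) * r" using i by simp
  also have "\<dots> \<le> Suc n * r" using fk by (intro mult_right_mono) auto
  finally show "r \<le> l \<and> l < Suc n * r \<and> l mod r = i \<and> e (l div r - 1) = k"
    using h md ef by auto
qed


lemma Ck_cif: "(P \<Longrightarrow> Ck k f) \<Longrightarrow> Ck k (\<lambda>y. c + (if P then f y else 0))"
proof (cases P)
  case True
  assume "P \<Longrightarrow> Ck k f"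
  then show ?thesis using True Ck_add[OF Ck_const[of k c], of f] by simp
next
  case False
  then show ?thesis by (simp add: Ck_const)
qed

lemma smooth_L:
  assumes A: "\<And>k. smooth_mat_fun r (A k)" and im: "i < N" "m < N"
  shows "Ck k (\<lambda>y. (1\<^sub>m N + Cm e n r N A y) $$ (i,m))"
proof -
  have eq: "(\<lambda>y. (1\<^sub>m N + Cm e n r N A y) $$ (i,m)) = (\<lambda>y. (if i = m then 1 else 0) +
     (if r \<le> i \<and> i < Suc n * r \<and> m < r then - (A (e (i div r - 1)) y $$ (i mod r, m)) else 0))"
    using im by (auto simp: Cm_def)
  show ?thesis unfolding eq
  proof (rule Ck_cif)
    assume True: "r \<le> i \<and> i < Suc n * r \<and> m < r"
    then have "i mod r < r" by auto
    then have "smooth_fun (\<lambda>y. A (e (i div r - 1)) y $$ (i mod r, m))"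
      using A[of "e (i div r - 1)"] True unfolding smooth_mat_fun_def by auto
    then have "Ck k (\<lambda>y. (-1) * A (e (i div r - 1)) y $$ (i mod r, m))"
      unfolding smooth_fun_def by (intro Ck_mult Ck_const) auto
    then show "Ck k (\<lambda>y. - A (e (i div r - 1)) y $$ (i mod r, m))" by simp
  qed
qed

lemma blin: "bounded_linear (\<lambda>y::real^'n. complex_of_real (y $ c))"
  by (rule bounded_linear_compose[OF bounded_linear_of_real bounded_linear_vec_nth])

lemma smooth_U:
  assumes im: "m < N" "j < N"
  shows "Ck k (\<lambda>y. (1\<^sub>m N + Bm e n r N y) $$ (m,j))"
proof -
  have eq: "(\<lambda>y. (1\<^sub>m N + Bm e n r N y) $$ (m,j)) = (\<lambda>y. (if m = j then 1 else 0) +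
     (if m < r \<and> r \<le> j \<and> j < Suc n * r \<and> j mod r = m then complex_of_real (y $ e (j div r - 1)) else 0))"
    using im by (auto simp: Bm_def)
  show ?thesis
    unfolding eq by (rule Ck_cif, rule Ck_linear[OF blin])
qed

lemma smooth_g:
  assumes A: "\<And>k. smooth_mat_fun r (A k)" and ij: "i < N" "j < N"
  shows "Ck k (\<lambda>y. ((1\<^sub>m N + Cm e n r N A y) * (1\<^sub>m N + Bm e n r N y)) $$ (i,j))"
proof -
  have eq: "(\<lambda>y. ((1\<^sub>m N + Cm e n r N A y) * (1\<^sub>m N + Bm e n r N y)) $$ (i,j)) =
    (\<lambda>y. \<Sum>m\<in>{0..<N}. (1\<^sub>m N + Cm e n r N A y) $$ (i,m) * (1\<^sub>m N + Bm e n r N y) $$ (m,j))"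
    using ij by (intro ext, subst index_mult_mat(1)) (auto simp: scalar_prod_def Cm_def Bm_def intro!: sum.cong)
  show ?thesis unfolding eq
    by (intro Ck_sum Ck_mult smooth_L[OF A] smooth_U) (use ij in auto)
qed

lemma deriv_row:
  assumes "i < r" "i < N" "l < N"
  shows "frechet_derivative (\<lambda>y. ((1\<^sub>m N + Cm e n r N A y) * (1\<^sub>m N + Bm e n r N y)) $$ (i,l)) (at x) (axis k 1)
    = (if r \<le> l \<and> l < Suc n * r \<and> l mod r = i \<and> e (l div r - 1) = k then 1 else 0)"
proof -
  have eq: "(\<lambda>y. ((1\<^sub>m N + Cm e n r N A y) * (1\<^sub>m N + Bm e n r N y)) $$ (i,l)) = (\<lambda>y. (if i = l then 1 else 0) +
     (if r \<le> l \<and> l < Suc n * r \<and> l mod r = i then complex_of_real (y $ e (l div r - 1)) else 0))"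
    by (intro ext, subst g_row) (use assms in \<open>auto simp: Bm_def\<close>)
  show ?thesis
  proof (cases "r \<le> l \<and> l < Suc n * r \<and> l mod r = i")
    case True
    have eq2: "(\<lambda>y. ((1\<^sub>m N + Cm e n r N A y) * (1\<^sub>m N + Bm e n r N y)) $$ (i,l)) =
       (\<lambda>y. (if i = l then 1 else 0) + complex_of_real (y $ e (l div r - 1)))"
      unfolding eq using True by simp
    have "((\<lambda>y. (if i = l then 1 else 0) + complex_of_real (y $ e (l div r - 1))) has_derivative
        (\<lambda>h. 0 + complex_of_real (h $ e (l div r - 1)))) (at x)"
      by (intro has_derivative_add has_derivative_const bounded_linear_imp_has_derivative blin)
    from frechet_derivative_at[OF this] show ?thesis unfolding eq2 using True assms
      by (auto simp: axis_def)
  next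
    case False
    have eq2: "(\<lambda>y. ((1\<^sub>m N + Cm e n r N A y) * (1\<^sub>m N + Bm e n r N y)) $$ (i,l)) =
       (\<lambda>y. (if i = l then 1 else 0) + 0)"
      unfolding eq if_not_P[OF False] ..
    show ?thesis unfolding eq2 using False by auto
  qed
qed


theorem mainTheorem5:
  fixes A :: "'n::finite \<Rightarrow> real^'n \<Rightarrow> complex mat" and r :: nat
  assumes "\<And>k. smooth_mat_fun r (A k)"
  shows "\<exists>g :: real^'n \<Rightarrow> complex mat.
           smooth_mat_fun ((2 * CARD('n) + 2) * r) g \<and>
           (\<forall>x. invertible_mat (g x)) \<and>
           (\<forall>k x. \<forall>i<r. \<forall>j<r.
              A k x $$ (i,j) = (partial_mat k g x * mat_inv (g x)) $$ (i,j))"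
proof -
  define n where "n = CARD('n)"
  obtain f :: "'n \<Rightarrow> nat" where f: "bij_betw f (UNIV::'n set) {0..<n}"
    using ex_bij_betw_finite_nat[of "UNIV::'n set"] n_def by auto
  define e where "e = inv_into UNIV f"
  have fk: "\<And>k. f k < n" using f by (auto simp: bij_betw_def)
  have ef: "\<And>k. e (f k) = k" using f unfolding e_def by (simp add: bij_betw_def)
  have fe: "\<And>q. q < n \<Longrightarrow> f (e q) = q" using f unfolding e_def
    by (auto simp: bij_betw_def intro!: f_inv_into_f)
  define N where "N = (2 * CARD('n) + 2) * r"
  define B where "B = Bm e n r N"
  define C where "C = Cm e n r N A"
  define g where "g = (\<lambda>y. (1\<^sub>m N + C y) * (1\<^sub>m N + B y))"
  define H where "H = (\<lambda>y. (1\<^sub>m N - B y) * (1\<^sub>m N - C y))"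
  have Bc: "B y \<in> carrier_mat N N" "C y \<in> carrier_mat N N" for y by (auto simp: B_def C_def)
  have gc: "g y \<in> carrier_mat N N" "H y \<in> carrier_mat N N" for y
    using Bc[of y] unfolding g_def H_def
    by (metis add_carrier_mat minus_carrier_mat mult_carrier_mat one_carrier_mat)+
  have gH: "g y * H y = 1\<^sub>m N" "H y * g y = 1\<^sub>m N" for y
  proof -
    have LL: "(1\<^sub>m N + C y) * (1\<^sub>m N - C y) = 1\<^sub>m N" "(1\<^sub>m N - C y) * (1\<^sub>m N + C y) = 1\<^sub>m N"
      using nilp_inv[OF Bc(2) Cm_sq[of e n r N A y, folded C_def]] by auto
    have UU: "(1\<^sub>m N + B y) * (1\<^sub>m N - B y) = 1\<^sub>m N" "(1\<^sub>m N - B y) * (1\<^sub>m N + B y) = 1\<^sub>m N"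
      using nilp_inv[OF Bc(1) Bm_sq[of e n r N y, folded B_def]] by auto
    have c: "1\<^sub>m N + C y \<in> carrier_mat N N" "1\<^sub>m N - C y \<in> carrier_mat N N"
      "1\<^sub>m N + B y \<in> carrier_mat N N" "1\<^sub>m N - B y \<in> carrier_mat N N"
      using Bc[of y] by (metis add_carrier_mat minus_carrier_mat one_carrier_mat)+
    have "g y * H y = (1\<^sub>m N + C y) * (((1\<^sub>m N + B y) * (1\<^sub>m N - B y)) * (1\<^sub>m N - C y))"
      unfolding g_def H_def
      by (simp only: assoc_mult_mat[OF c(1) c(3) mult_carrier_mat[OF c(4) c(2)]] assoc_mult_mat[OF c(3) c(4) c(2)])
    also have "\<dots> = 1\<^sub>m N" by (simp only: UU(1) left_mult_one_mat[OF c(2)] LL(1))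
    finally show "g y * H y = 1\<^sub>m N" .
    have "H y * g y = (1\<^sub>m N - B y) * (((1\<^sub>m N - C y) * (1\<^sub>m N + C y)) * (1\<^sub>m N + B y))"
      unfolding g_def H_def
      by (simp only: assoc_mult_mat[OF c(4) c(2) mult_carrier_mat[OF c(1) c(3)]] assoc_mult_mat[OF c(2) c(1) c(3)])
    also have "\<dots> = 1\<^sub>m N" by (simp only: LL(2) left_mult_one_mat[OF c(3)] UU(2))
    finally show "H y * g y = 1\<^sub>m N" .
  qed
  have inv: "mat_inv (g y) = H y" "invertible_mat (g y)" for y
    using mat_inv_eq[OF gc gH] by auto
  have rN: "Suc n * r \<le> N" unfolding N_def n_def by (intro mult_right_mono) auto
  show ?thesis
  proof (intro exI[of _ g] conjI allI impI)
    show "smooth_mat_fun ((2 * CARD('n) + 2) * r) g"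
      unfolding smooth_mat_fun_def N_def[symmetric]
    proof (intro conjI allI impI)
      fix x show "g x \<in> carrier_mat N N" by (rule gc)
    next
      fix i j assume ij: "i < N" "j < N"
      show "smooth_fun (\<lambda>x. g x $$ (i, j))" unfolding smooth_fun_def g_def B_def C_def
        using smooth_g[of r A, OF assms ij] by blast
    qed
    show "invertible_mat (g x)" for x by (rule inv)
  next
    fix k x i j assume ij: "i < r" "j < r"
    have rN': "r \<le> N" using rN by simp
    have iN: "i < N" "j < N" using ij rN' by linarith+
    define p where "p = Suc (f k) * r + i"
    have pc: "r \<le> p \<and> p < Suc n * r \<and> p mod r = i \<and> e (p div r - 1) = k"
      by (rule iffD2[OF idx_equiv[OF fe ef fk ij(1)] p_def])
    have pN: "p < N" "r \<le> p" using pc rN by auto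
    have P: "partial_mat k g x $$ (i,l) = (if l = p then 1 else 0)" if l: "l < N" for l
    proof -
      have "partial_mat k g x $$ (i,l) = frechet_derivative (\<lambda>y. g y $$ (i,l)) (at x) (axis k 1)"
        using gc[of x] l iN by (simp add: partial_mat_def)
      also have "\<dots> = (if r \<le> l \<and> l < Suc n * r \<and> l mod r = i \<and> e (l div r - 1) = k then 1 else 0)"
        unfolding g_def B_def C_def by (rule deriv_row) (use ij iN l in auto)
      also have "\<dots> = (if l = p then 1 else 0)" unfolding p_def using idx_equiv[OF fe ef fk ij(1), of l] by presburger
      finally show ?thesis .
    qed
    have "(partial_mat k g x * mat_inv (g x)) $$ (i,j) = (\<Sum>l\<in>{0..<N}. (if l = p then 1 else 0) * H x $$ (l,j))"
      unfolding inv using gc[of x] iN P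
      by (subst index_mult_mat(1)) (auto simp: partial_mat_def scalar_prod_def intro!: sum.cong)
    also have "\<dots> = H x $$ (p,j)" using pN by (simp add: delta_mult)
    also have "\<dots> = - C x $$ (p,j)" unfolding H_def B_def C_def by (rule H_col) (use pN ij iN in auto)
    also have "\<dots> = A k x $$ (i,j)"
    proof -
      have "- C x $$ (p,j) = A (e (p div r - 1)) x $$ (p mod r, j)"
        using pc pN ij iN unfolding C_def Cm_def by simp
      then show ?thesis using pc by simp
    qed
    finally show "A k x $$ (i,j) = (partial_mat k g x * mat_inv (g x)) $$ (i,j)" ..
  qed
qed

end
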